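(* Let $P$ and $Q$ be recurrent stochastic matrices over a countable set $\Omega$, and let $\rho$ be a *-automorphism of $\ell^\infty(\Omega)$. If there is a $\rho$-unitary isomorphism $Arv(P)\to Arv(Q)$, then $P_{ij}=Q_{\sigma_\rho(i)\sigma_\rho(j)}$ for all $i,j\in\Omega$.
   Context: A stochastic matrix over $\Omega$ has nonnegative entries and row sums $1$; $P^{(n)}_{ij}$ is the $(i,j)$ entry of $P^n$; $P$ is recurrent if $\sum_{n\ge1}P^{(n)}_{ii}=\infty$ for all $i$. $\sigma_\rho$ is the permutation of $\Omega$ with $\rho(p_j)=p_{\sigma_\rho(j)}$, $p_j$ the indicator of $\{j\}$. $Arv(P)$: $Arv(P)_0=\ell^\infty(\Omega)$; $Arv(P)_n$ ($n\ge1$) is the set of complex $\Omega\times\Omega$ matrices $A=[a_{ij}]$ with $a_{ij}=0$ whenever $P^{(n)}_{ij}=0$ and $\sup_j\sum_i|a_{ij}|^2<\infty$, a W*-correspondence over $\ell^\infty(\Omega)$ with actions by diagonal matrices and inner product $\mathrm{Diag}(A^*B)$; $U^P_{n,m}(A\otimes B)=(\sqrt{P^{n+m}})^{\flat}*[(\sqrt{P^n}*A)(\sqrt{P^m}*B)]$ for $n,m\ge1$ ($*$ entrywise product, $\sqrt\cdot$ entrywise, $M^\flat_{ik}=M_{ik}^{-1}$ if $M_{ik}>0$, else $0$), $U_{0,n},U_{n,0}$ module actions. A $\rho$-unitary isomorphism $V:Arv(P)\to Arv(Q)$ is a family $(V_n)$ with $V_0=\rho$, each $V_n$ ($n\ge1$)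 surjective linear with $V_n(a\xi b)=\rho(a)V_n(\xi)\rho(b)$ and $\rho^{-1}(\langle V_n\xi,V_n\eta\rangle)=\langle\xi,\eta\rangle$, and $V_{n+m}U^P_{n,m}=U^Q_{n,m}(V_n\otimes V_m)$. *)

theory Defs
  imports "HOL-Analysis.Analysis"
begin

definition stochastic :: "('a \<Rightarrow> 'a \<Rightarrow> real) \<Rightarrow> bool" where
  "stochastic P \<longleftrightarrow> (\<forall>i j. 0 \<le> P i j) \<and> (\<forall>i. ((\<lambda>j. P i j) has_sum 1) UNIV)"

primrec mpow :: "('a \<Rightarrow> 'a \<Rightarrow> real) \<Rightarrow> nat \<Rightarrow> 'a \<Rightarrow> 'a \<Rightarrow> real" where
  "mpow P 0 = (\<lambda>i j. if i = j then 1 else 0)"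
| "mpow P (Suc n) = (\<lambda>i k. \<Sum>\<^sub>\<infinity>j. mpow P n i j * P j k)"

definition recurrent :: "('a \<Rightarrow> 'a \<Rightarrow> real) \<Rightarrow> bool" where
  "recurrent P \<longleftrightarrow> (\<forall>i. \<not> summable (\<lambda>n. mpow P (Suc n) i i))"

definition linf :: "('a \<Rightarrow> complex) set" where
  "linf = {f. \<exists>C. \<forall>x. cmod (f x) \<le> C}"

definition star_automorphism :: "(('a \<Rightarrow> complex) \<Rightarrow> ('a \<Rightarrow> complex)) \<Rightarrow> bool" where
  "star_automorphism \<rho> \<longleftrightarrow>
     bij_betw \<rho> linf linf \<and>
     (\<forall>f\<in>linf. \<forall>g\<in>linf. \<rho> (\<lambda>x. f x + g x) = (\<lambda>x. \<rho> f x + \<rho> g x)) \<and>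
     (\<forall>f\<in>linf. \<forall>c. \<rho> (\<lambda>x. c * f x) = (\<lambda>x. c * \<rho> f x)) \<and>
     (\<forall>f\<in>linf. \<forall>g\<in>linf. \<rho> (\<lambda>x. f x * g x) = (\<lambda>x. \<rho> f x * \<rho> g x)) \<and>
     (\<forall>f\<in>linf. \<rho> (\<lambda>x. cnj (f x)) = (\<lambda>x. cnj (\<rho> f x)))"

definition sigma_of :: "(('a \<Rightarrow> complex) \<Rightarrow> ('a \<Rightarrow> complex)) \<Rightarrow> 'a \<Rightarrow> 'a" where
  "sigma_of \<rho> j = (THE k. \<rho> (indicator {j}) = indicator {k})"

definition arv :: "('a \<Rightarrow> 'a \<Rightarrow> real) \<Rightarrow> nat \<Rightarrow> ('a \<Rightarrow> 'a \<Rightarrow> complex) set" where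
  "arv P n = {A. (\<forall>i j. mpow P n i j = 0 \<longrightarrow> A i j = 0) \<and>
                 (\<forall>j. (\<lambda>i. (cmod (A i j))\<^sup>2) summable_on UNIV) \<and>
                 (\<exists>C. \<forall>j. (\<Sum>\<^sub>\<infinity>i. (cmod (A i j))\<^sup>2) \<le> C)}"

definition arv_act :: "('a \<Rightarrow> complex) \<Rightarrow> ('a \<Rightarrow> 'a \<Rightarrow> complex) \<Rightarrow> ('a \<Rightarrow> complex) \<Rightarrow> ('a \<Rightarrow> 'a \<Rightarrow> complex)" where
  "arv_act a A b = (\<lambda>i j. a i * A i j * b j)"

definition arv_inner :: "('a \<Rightarrow> 'a \<Rightarrow> complex) \<Rightarrow> ('a \<Rightarrow> 'a \<Rightarrow> complex) \<Rightarrow> ('a \<Rightarrow> complex)" where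
  "arv_inner A B = (\<lambda>j. \<Sum>\<^sub>\<infinity>i. cnj (A i j) * B i j)"

definition flat :: "real \<Rightarrow> real" where
  "flat x = (if x > 0 then inverse x else 0)"

definition arvU :: "('a \<Rightarrow> 'a \<Rightarrow> real) \<Rightarrow> nat \<Rightarrow> nat \<Rightarrow> ('a \<Rightarrow> 'a \<Rightarrow> complex) \<Rightarrow> ('a \<Rightarrow> 'a \<Rightarrow> complex) \<Rightarrow> ('a \<Rightarrow> 'a \<Rightarrow> complex)" where
  "arvU P n m A B = (\<lambda>i k. complex_of_real (flat (sqrt (mpow P (n + m) i k))) *
      (\<Sum>\<^sub>\<infinity>j. (complex_of_real (sqrt (mpow P n i j)) * A i j) *
               (complex_of_real (sqrt (mpow P m j k)) * B j k)))"

text \<open>rho-unitary isomorphism Arv(P) -> Arv(Q); V_0 = rho is implicit, V n for n >= 1.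
  The compatibility with U_{0,n}, U_{n,0} is the bimodule property.\<close>
definition rho_unitary_iso ::
  "('a \<Rightarrow> 'a \<Rightarrow> real) \<Rightarrow> ('a \<Rightarrow> 'a \<Rightarrow> real) \<Rightarrow> (('a \<Rightarrow> complex) \<Rightarrow> ('a \<Rightarrow> complex))
    \<Rightarrow> (nat \<Rightarrow> ('a \<Rightarrow> 'a \<Rightarrow> complex) \<Rightarrow> ('a \<Rightarrow> 'a \<Rightarrow> complex)) \<Rightarrow> bool" where
  "rho_unitary_iso P Q \<rho> V \<longleftrightarrow>
     (\<forall>n\<ge>1. V n ` arv P n = arv Q n) \<and>
     (\<forall>n\<ge>1. \<forall>A\<in>arv P n. \<forall>B\<in>arv P n. V n (\<lambda>i j. A i j + B i j) = (\<lambda>i j. V n A i j + V n B i j)) \<and>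
     (\<forall>n\<ge>1. \<forall>A\<in>arv P n. \<forall>c. V n (\<lambda>i j. c * A i j) = (\<lambda>i j. c * V n A i j)) \<and>
     (\<forall>n\<ge>1. \<forall>A\<in>arv P n. \<forall>a\<in>linf. \<forall>b\<in>linf.
        V n (arv_act a A b) = arv_act (\<rho> a) (V n A) (\<rho> b)) \<and>
     (\<forall>n\<ge>1. \<forall>A\<in>arv P n. \<forall>B\<in>arv P n.
        arv_inner (V n A) (V n B) = \<rho> (arv_inner A B)) \<and>
     (\<forall>n\<ge>1. \<forall>m\<ge>1. \<forall>A\<in>arv P n. \<forall>B\<in>arv P m.
        V (n + m) (arvU P n m A B) = arvU Q n m (V n A) (V m B))"

end

theory Submission
  imports Defs
begin


lemma has_sum_single_pt: "((\<lambda>x. if x = a then c else 0) has_sum (c::'b::{comm_monoid_add,t2_space})) UNIV"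
proof -
  have "((\<lambda>x. if x = a then c else 0) has_sum c) {a}" by (simp add: has_sum_finiteI)
  thus ?thesis by (subst (asm) has_sum_cong_neutral[where T=UNIV]) auto
qed

lemma infsum_single_pt: "(\<Sum>\<^sub>\<infinity>x. if x = a then c else 0) = (c::'b::{comm_monoid_add,t2_space})"
  by (rule infsumI[OF has_sum_single_pt])

lemma le_infsum_pt:
  fixes f :: "'a \<Rightarrow> real"
  assumes "f summable_on UNIV" "\<And>x. f x \<ge> 0"
  shows "f a \<le> infsum f UNIV"
  using finite_sum_le_infsum[OF assms(1), of "{a}"] assms(2) by simp

lemma stoch_row: "stochastic P \<Longrightarrow> ((\<lambda>k. P j k) has_sum 1) UNIV"
  unfolding stochastic_def by blast
lemma stoch_nn: "stochastic P \<Longrightarrow> 0 \<le> P j k"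
  unfolding stochastic_def by blast
lemma stoch_le1: assumes st: "stochastic P" shows "P j k \<le> 1"
proof -
  have "P j k \<le> (\<Sum>\<^sub>\<infinity>k. P j k)"
    by (rule le_infsum_pt[OF has_sum_imp_summable[OF stoch_row[OF st]]]) (rule stoch_nn[OF st])
  also have "\<dots> = 1" by (rule infsumI[OF stoch_row[OF st]])
  finally show ?thesis .
qed

lemma sum_weighted:
  fixes x :: "'a \<Rightarrow> real"
  assumes st: "stochastic P" and x: "\<And>j. 0 \<le> x j" and xs: "x summable_on UNIV"
  shows "(\<lambda>j. x j * P j k) summable_on UNIV"
  by (rule summable_on_comparison_test[OF xs]) (use stoch_le1[OF st] stoch_nn[OF st] x in \<open>auto intro: mult_left_le mult_nonneg_nonneg\<close>)

lemma fub:
  fixes x w :: "'a \<Rightarrow> real"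
  assumes st: "stochastic P" and x: "\<And>j. 0 \<le> x j" and xs: "x summable_on UNIV"
    and w0: "\<And>k. 0 \<le> w k" and w1: "\<And>k. w k \<le> 1"
  shows "(\<lambda>k. (\<Sum>\<^sub>\<infinity>j. x j * P j k) * w k) summable_on UNIV"
    and "(\<Sum>\<^sub>\<infinity>k. (\<Sum>\<^sub>\<infinity>j. x j * P j k) * w k) = (\<Sum>\<^sub>\<infinity>j. x j * (\<Sum>\<^sub>\<infinity>k. P j k * w k))"
proof -
  have Pn: "\<And>j k. 0 \<le> P j k" using stoch_nn[OF st] .
  have inner: "(\<lambda>k. P j k * w k) summable_on UNIV" for j
    by (rule summable_on_comparison_test[of "\<lambda>k. P j k"]) 
       (use stoch_row[OF st, of j] Pn w0 w1 in \<open>auto intro: mult_left_le has_sum_imp_summable\<close>)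
  have innerle: "(\<Sum>\<^sub>\<infinity>k. P j k * w k) \<le> 1" for j
  proof -
    have "(\<Sum>\<^sub>\<infinity>k. P j k * w k) \<le> (\<Sum>\<^sub>\<infinity>k. P j k)"
      by (rule infsum_mono[OF inner]) (use stoch_row[OF st, of j] Pn w1 in \<open>auto intro: mult_left_le has_sum_imp_summable\<close>)
    also have "\<dots> = 1" by (rule infsumI[OF stoch_row[OF st, of j]])
    finally show ?thesis .
  qed
  have innernn: "0 \<le> (\<Sum>\<^sub>\<infinity>k. P j k * w k)" for j by (rule infsum_nonneg) (use Pn w0 in auto)
  define F where "F = (\<lambda>j k. x j * (P j k * w k))"
  have Fs: "(\<lambda>(j,k). F j k) summable_on Sigma UNIV (\<lambda>_. UNIV)"
  proof (rule summable_on_SigmaI[where g="\<lambda>j. x j * (\<Sum>\<^sub>\<infinity>k. P j k * w k)"])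
    show "((\<lambda>k. case (j, k) of (j, k) \<Rightarrow> F j k) has_sum x j * (\<Sum>\<^sub>\<infinity>k. P j k * w k)) UNIV" for j
      unfolding F_def using has_sum_cmult_right[OF has_sum_infsum[OF inner]] by simp
    show "(\<lambda>j. x j * (\<Sum>\<^sub>\<infinity>k. P j k * w k)) summable_on UNIV"
      by (rule summable_on_comparison_test[OF xs]) (use x innerle innernn in \<open>auto intro: mult_left_le\<close>)
    show "0 \<le> (case (j, k) of (j, k) \<Rightarrow> F j k)" for j k unfolding F_def using x Pn w0 by simp
  qed
  hence Fs': "(\<lambda>(j,k). F j k) summable_on UNIV \<times> UNIV" by simp
  have sw: "(\<lambda>(k,j). F j k) summable_on UNIV \<times> UNIV"
    using iffD1[OF summable_on_swap Fs'] by simp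
  have innerj: "(\<lambda>j. F j k) summable_on UNIV" for k
    unfolding F_def
    by (rule summable_on_comparison_test[OF xs]) (use x Pn w0 w1 stoch_le1[OF st] in \<open>auto intro!: mult_left_le mult_le_one\<close>)
  have eq: "(\<Sum>\<^sub>\<infinity>j. F j k) = (\<Sum>\<^sub>\<infinity>j. x j * P j k) * w k" for k
    unfolding F_def by (simp add: mult.assoc[symmetric] infsum_cmult_left')
  have "(\<lambda>k. \<Sum>\<^sub>\<infinity>j. F j k) summable_on UNIV"
    using summable_on_Sigma[OF uniformly_continuous_add, of "\<lambda>k j. F j k" UNIV "\<lambda>_. UNIV"] sw innerj by simp
  thus "(\<lambda>k. (\<Sum>\<^sub>\<infinity>j. x j * P j k) * w k) summable_on UNIV" using eq by simp
  have "(\<Sum>\<^sub>\<infinity>j. \<Sum>\<^sub>\<infinity>k. F j k) = (\<Sum>\<^sub>\<infinity>k. \<Sum>\<^sub>\<infinity>j. F j k)"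
    by (rule infsum_swap_banach) (use Fs' in simp)
  thus "(\<Sum>\<^sub>\<infinity>k. (\<Sum>\<^sub>\<infinity>j. x j * P j k) * w k) = (\<Sum>\<^sub>\<infinity>j. x j * (\<Sum>\<^sub>\<infinity>k. P j k * w k))"
  proof -
    have r: "(\<Sum>\<^sub>\<infinity>k. \<Sum>\<^sub>\<infinity>j. F j k) = (\<Sum>\<^sub>\<infinity>k. (\<Sum>\<^sub>\<infinity>j. x j * P j k) * w k)"
      using eq by presburger
    have l: "(\<Sum>\<^sub>\<infinity>j. \<Sum>\<^sub>\<infinity>k. F j k) = (\<Sum>\<^sub>\<infinity>j. x j * (\<Sum>\<^sub>\<infinity>k. P j k * w k))"
      unfolding F_def by (simp only: infsum_cmult_right')
    show ?thesis using r l \<open>(\<Sum>\<^sub>\<infinity>j. \<Sum>\<^sub>\<infinity>k. F j k) = (\<Sum>\<^sub>\<infinity>k. \<Sum>\<^sub>\<infinity>j. F j k)\<close> by simp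
  qed
qed

lemma mpow_nn: "stochastic P \<Longrightarrow> 0 \<le> mpow P n i j"
proof (induction n arbitrary: j)
  case 0 then show ?case by simp
next
  case (Suc n)
  show ?case unfolding mpow.simps
    by (rule infsum_nonneg, rule mult_nonneg_nonneg) (use Suc stoch_nn in auto)
qed

lemma mpow_row: "stochastic P \<Longrightarrow> ((\<lambda>k. mpow P n i k) has_sum 1) UNIV"
proof (induction n)
  case 0
  have e: "mpow P 0 i = (\<lambda>k. if k = i then (1::real) else 0)" by (rule ext) simp
  show ?case unfolding e by (rule has_sum_single_pt)
next
  case (Suc n)
  have xs: "(\<lambda>j. mpow P n i j) summable_on UNIV" by (rule has_sum_imp_summable[OF Suc.IH[OF Suc.prems]])
  note f = fub[OF Suc.prems(1) mpow_nn[OF Suc.prems(1)] xs, of "\<lambda>_. 1"]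
  have r1: "(\<Sum>\<^sub>\<infinity>k. P j k) = 1" for j by (rule infsumI[OF stoch_row[OF Suc.prems]])
  have s: "(\<lambda>k. mpow P (Suc n) i k) summable_on UNIV" using f(1) by simp
  have "(\<Sum>\<^sub>\<infinity>k. mpow P (Suc n) i k) = (\<Sum>\<^sub>\<infinity>j. mpow P n i j * (\<Sum>\<^sub>\<infinity>k. P j k))"
    using f(2) by simp
  also have "\<dots> = (\<Sum>\<^sub>\<infinity>j. mpow P n i j)" by (simp add: r1)
  also have "\<dots> = 1" by (rule infsumI[OF Suc.IH[OF Suc.prems]])
  finally show ?case using has_sum_infsum[OF s] by simp
qed

lemma mpow_le1: assumes st: "stochastic P" shows "mpow P n i j \<le> 1"
proof -
  have "mpow P n i j \<le> (\<Sum>\<^sub>\<infinity>k. mpow P n i k)"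
    by (rule le_infsum_pt[OF has_sum_imp_summable[OF mpow_row[OF st]]]) (rule mpow_nn[OF st])
  also have "\<dots> = 1" by (rule infsumI[OF mpow_row[OF st]])
  finally show ?thesis .
qed

lemma mpow_one: "mpow P (Suc 0) = P"
proof (intro ext)
  fix i k
  have "(\<lambda>j. (if i = j then 1 else 0) * P j k) = (\<lambda>j. if j = i then P i k else 0)" by auto
  thus "mpow P (Suc 0) i k = P i k" by (simp add: infsum_single_pt)
qed

lemma mpow_ck:
  assumes st: "stochastic P"
  shows "mpow P n i j * mpow P m j k \<le> mpow P (n + m) i k"
proof (induction m arbitrary: k)
  case 0
  then show ?case using mpow_nn[OF st] mpow_le1[OF st] by auto
next
  case (Suc m)
  have s1: "(\<lambda>l. mpow P (n+m) i l) summable_on UNIV" by (rule has_sum_imp_summable[OF mpow_row[OF st]])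
  have s2: "(\<lambda>l. mpow P m j l) summable_on UNIV" by (rule has_sum_imp_summable[OF mpow_row[OF st]])
  have "mpow P n i j * mpow P (Suc m) j k = (\<Sum>\<^sub>\<infinity>l. mpow P n i j * (mpow P m j l * P l k))"
    by (simp add: infsum_cmult_right')
  also have "\<dots> \<le> (\<Sum>\<^sub>\<infinity>l. mpow P (n+m) i l * P l k)"
  proof (rule infsum_mono)
    show "(\<lambda>l. mpow P n i j * (mpow P m j l * P l k)) summable_on UNIV"
      by (rule summable_on_cmult_right, rule sum_weighted[OF st mpow_nn[OF st] s2])
    show "(\<lambda>l. mpow P (n+m) i l * P l k) summable_on UNIV"
      by (rule sum_weighted[OF st mpow_nn[OF st] s1])
    show "mpow P n i j * (mpow P m j l * P l k) \<le> mpow P (n + m) i l * P l k" for l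
      using Suc.IH[of l] stoch_nn[OF st] by (simp add: mult.assoc[symmetric] mult_right_mono)
  qed
  also have "\<dots> = mpow P (n + Suc m) i k" by simp
  finally show ?case .
qed



declare mpow.simps(2)[simp del]

lemma mpow_1: "mpow P 1 = P" using mpow_one by (simp add: One_nat_def)

lemma diag:
  fixes q :: "nat \<Rightarrow> 'a \<Rightarrow> 'a \<Rightarrow> real"
  assumes st: "stochastic P"
    and q01: "\<And>n x y. 0 \<le> q n x y \<and> q n x y \<le> 1"
    and supp: "\<And>n x y. n \<ge> 1 \<Longrightarrow> (mpow P n x y > 0 \<longleftrightarrow> q n x y > 0)"
    and E: "\<And>n m x y z. n \<ge> 1 \<Longrightarrow> m \<ge> 1 \<Longrightarrow> mpow P n x y > 0 \<Longrightarrow> mpow P m y z > 0 \<Longrightarrow>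
            mpow P n x y * mpow P m y z * q (n+m) x z = q n x y * q m y z * mpow P (n+m) x z"
    and recP: "\<not> summable (\<lambda>n. mpow P (Suc n) i i)"
    and recQ: "\<not> summable (\<lambda>n. q (Suc n) i i)"
    and t: "t \<ge> 1" "mpow P t i i > 0"
  shows "q t i i = mpow P t i i"
proof -
  define S where "S = {t. t \<ge> 1 \<and> mpow P t i i > 0}"
  define b where "b t = q t i i / mpow P t i i" for t
  have Sadd: "s + u \<in> S" if "s \<in> S" "u \<in> S" for s u
  proof -
    have "mpow P s i i * mpow P u i i > 0" using that by (simp add: S_def)
    also have "\<dots> \<le> mpow P (s+u) i i" by (rule mpow_ck[OF st])
    finally show ?thesis using that by (simp add: S_def)
  qed
  have bpos: "b s > 0" if "s \<in> S" for s using that supp[of s i i] by (simp add: S_def b_def)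
  have bmul: "b (s+u) = b s * b u" if "s \<in> S" "u \<in> S" for s u
  proof -
    have p: "mpow P s i i > 0" "mpow P u i i > 0" "mpow P (s+u) i i > 0" "s \<ge> 1" "u \<ge> 1"
      using that Sadd[OF that] by (auto simp: S_def)
    from E[OF p(4,5,1,2)] p show ?thesis unfolding b_def by (simp add: field_simps)
  qed
  have bpow: "b (k * s) = b s ^ k" if "s \<in> S" "k \<ge> 1" for s k
    using that(2)
  proof (induction k rule: dec_induct)
    case base then show ?case by simp
  next
    case (step k)
    have "k * s \<in> S" using step.hyps(1)
    proof (induction k rule: dec_induct)
      case base then show ?case using that by simp
    next
      case (step k)
      have "k * s + s \<in> S" by (rule Sadd[OF step.IH that(1)])
      then show ?case by (simp add: add.commute)
    qed
    then show ?case using step bmul[OF \<open>k * s \<in> S\<close> that(1)] by (simp add: add.commute mult.commute)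
  qed
  have b1: "b s = 1" if sS: "s \<in> S" for s
  proof (rule ccontr)
    assume ne: "b s \<noteq> 1"
    have s0: "s > 0" using sS by (simp add: S_def)
    define c where "c = root s (b s)"
    have cpos: "c > 0" using bpos[OF sS] s0 by (simp add: c_def)
    have cs: "c ^ s = b s" using bpos[OF sS] s0 by (simp add: c_def)
    have bc: "b u = c ^ u" if uS: "u \<in> S" for u
    proof -
      have "b u ^ s = b (s * u)" using bpow[OF uS, of s] s0 by simp
      also have "\<dots> = b (u * s)" by (simp add: mult.commute)
      also have "\<dots> = b s ^ u" using bpow[OF sS, of u] uS by (simp add: S_def)
      also have "\<dots> = (c ^ u) ^ s" by (simp add: cs[symmetric] power_mult[symmetric] mult.commute)
      finally show ?thesis
        using power_eq_imp_eq_base[of "b u" s "c^u"] bpos[OF uS] cpos s0 by simp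
    qed
    have "c \<noteq> 1" using cs ne by auto
    then consider "c < 1" | "c > 1" by linarith
    then show False
    proof cases
      case 1
      have "summable (\<lambda>n. q (Suc n) i i)"
      proof (rule summable_comparison_test'[of "\<lambda>n. c ^ Suc n" 0])
        show "summable (\<lambda>n. c ^ Suc n)" using summable_geometric[of c] 1 cpos
          by (simp add: summable_mult)
        fix n :: nat
        show "norm (q (Suc n) i i) \<le> c ^ Suc n"
        proof (cases "mpow P (Suc n) i i > 0")
          case True
          hence inS: "Suc n \<in> S" by (simp add: S_def)
          have "q (Suc n) i i = b (Suc n) * mpow P (Suc n) i i" using True by (simp add: b_def)
          also have "\<dots> \<le> b (Suc n)" using mult_left_le[of "mpow P (Suc n) i i" "b (Suc n)"] bpos[OF inS] mpow_le1[OF st, of "Suc n" i i] by simp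
          finally show ?thesis using q01[of "Suc n" i i] bc[OF inS] by simp
        next
          case False
          hence "q (Suc n) i i = 0" using supp[of "Suc n" i i] q01[of "Suc n" i i] by auto
          then show ?thesis using cpos by simp
        qed
      qed
      then show False using recQ by simp
    next
      case 2
      have "summable (\<lambda>n. mpow P (Suc n) i i)"
      proof (rule summable_comparison_test'[of "\<lambda>n. (1/c) ^ Suc n" 0])
        show "summable (\<lambda>n. (1/c) ^ Suc n)" using summable_geometric[of "1/c"] 2 cpos
          by (simp add: summable_mult)
        fix n :: nat
        show "norm (mpow P (Suc n) i i) \<le> (1/c) ^ Suc n"
        proof (cases "mpow P (Suc n) i i > 0")
          case True
          hence inS: "Suc n \<in> S" by (simp add: S_def)
          have "mpow P (Suc n) i i = q (Suc n) i i / b (Suc n)" using True supp[of "Suc n" i i] by (simp add: b_def)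
          also have "\<dots> \<le> 1 / b (Suc n)" using bpos[OF inS] q01[of "Suc n" i i] by (simp add: divide_right_mono)
          finally show ?thesis using True bc[OF inS] by (simp add: power_one_over)
        next
          case False
          then show ?thesis using mpow_nn[OF st, of "Suc n" i i] cpos by simp
        qed
      qed
      then show False using recP by simp
    qed
  qed
  have "t \<in> S" using t by (simp add: S_def)
  from b1[OF this] t show ?thesis by (simp add: b_def)
qed



lemma has_sum_diff':
  fixes f g :: "'a \<Rightarrow> real"
  assumes "(f has_sum a) A" "(g has_sum b) A"
  shows "((\<lambda>x. f x - g x) has_sum (a - b)) A"
proof -
  have "((\<lambda>x. - g x) has_sum (- b)) A" using assms(2) has_sum_uminus[where f=g and a="-b" and A=A] by simp
  from has_sum_add[OF assms(1) this] show ?thesis by simp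
qed

lemma rowfix:
  fixes q :: "nat \<Rightarrow> 'a \<Rightarrow> 'a \<Rightarrow> real"
  assumes st: "stochastic P"
    and q01: "\<And>n x y. 0 \<le> q n x y \<and> q n x y \<le> 1"
    and supp: "\<And>n x y. n \<ge> 1 \<Longrightarrow> (mpow P n x y > 0 \<longleftrightarrow> q n x y > 0)"
    and E: "\<And>n m x y z. n \<ge> 1 \<Longrightarrow> m \<ge> 1 \<Longrightarrow> mpow P n x y > 0 \<Longrightarrow> mpow P m y z > 0 \<Longrightarrow>
            mpow P n x y * mpow P m y z * q (n+m) x z = q n x y * q m y z * mpow P (n+m) x z"
    and recP: "\<not> summable (\<lambda>n. mpow P (Suc n) i i)"
    and recQ: "\<not> summable (\<lambda>n. q (Suc n) i i)"
    and rowQ: "\<And>x. ((\<lambda>k. q 1 x k) has_sum 1) UNIV"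
  shows "q 1 i k = P i k"
proof -
  note P1 = mpow_1[of P]
  have Pn: "0 \<le> P x y" for x y by (rule stoch_nn[OF st])
  have Mn: "0 \<le> mpow P n x y" for n x y by (rule mpow_nn[OF st])
  have rowP: "((\<lambda>k. P x k) has_sum 1) UNIV" for x by (rule stoch_row[OF st])
  have supp1: "P x y > 0 \<longleftrightarrow> q 1 x y > 0" for x y using supp[of 1 x y] P1 by simp
  define a where "a t j = q t i j / mpow P t i j" for t j
  define a1 where "a1 x k = q 1 x k / P x k" for x k
  define w where "w t j = min (a t j) 1" for t j
  have w0: "0 \<le> w t j" for t j unfolding w_def a_def using q01 Mn by simp
  have w1: "w t j \<le> 1" for t j unfolding w_def by simp
  have q1eq: "P x k * a1 x k = q 1 x k" for x k
  proof (cases "P x k = 0")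
    case True
    then have "q 1 x k = 0" using supp1[of x k] q01[of 1 x k] by auto
    then show ?thesis using True by simp
  next
    case False then show ?thesis by (simp add: a1_def)
  qed
  have aE: "a (Suc t) k = a t j * a1 j k" if "t \<ge> 1" "mpow P t i j > 0" "P j k > 0" for t j k
  proof -
    have pj: "mpow P 1 j k > 0" using that(3) P1 by simp
    have "mpow P t i j * mpow P 1 j k \<le> mpow P (t + 1) i k" by (rule mpow_ck[OF st])
    moreover have "mpow P t i j * mpow P 1 j k > 0" using that(2) pj by simp
    ultimately have pk: "mpow P (Suc t) i k > 0" by simp
    from E[OF that(1) order_refl that(2) pj] have
      "mpow P t i j * P j k * q (Suc t) i k = q t i j * q 1 j k * mpow P (Suc t) i k" using P1 by simp
    then show ?thesis using pk that(2,3) unfolding a_def a1_def by (simp add: field_simps)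
  qed
  have sPw: "(\<lambda>k. P j k * w t k) summable_on UNIV" for j t
    by (rule summable_on_comparison_test[OF has_sum_imp_summable[OF rowP[of j]]])
       (use Pn w0 w1 in \<open>auto intro: mult_left_le\<close>)
  have inner01: "0 \<le> (\<Sum>\<^sub>\<infinity>k. P j k * w t k) \<and> (\<Sum>\<^sub>\<infinity>k. P j k * w t k) \<le> 1" for j t
  proof
    show "0 \<le> (\<Sum>\<^sub>\<infinity>k. P j k * w t k)" by (rule infsum_nonneg) (use Pn w0 in simp)
    have "(\<Sum>\<^sub>\<infinity>k. P j k * w t k) \<le> (\<Sum>\<^sub>\<infinity>k. P j k)"
      by (rule infsum_mono[OF sPw has_sum_imp_summable[OF rowP[of j]]]) (use Pn w1 in \<open>auto intro: mult_left_le\<close>)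
    also have "\<dots> = 1" by (rule infsumI[OF rowP])
    finally show "(\<Sum>\<^sub>\<infinity>k. P j k * w t k) \<le> 1" .
  qed
  have inner_le: "(\<Sum>\<^sub>\<infinity>k. P j k * w (Suc t) k) \<le> w t j" if "t \<ge> 1" "mpow P t i j > 0" for t j
  proof -
    have "(\<Sum>\<^sub>\<infinity>k. P j k * w (Suc t) k) \<le> (\<Sum>\<^sub>\<infinity>k. a t j * q 1 j k)"
    proof (rule infsum_mono[OF sPw])
      show "(\<lambda>k. a t j * q 1 j k) summable_on UNIV"
        by (rule summable_on_cmult_right, rule has_sum_imp_summable[OF rowQ])
      fix k
      show "P j k * w (Suc t) k \<le> a t j * q 1 j k"
      proof (cases "P j k > 0")
        case True
        have "w (Suc t) k \<le> a t j * a1 j k" unfolding w_def using aE[OF that True] by simp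
        hence "P j k * w (Suc t) k \<le> P j k * (a t j * a1 j k)" using Pn by (simp add: mult_left_mono)
        also have "\<dots> = a t j * q 1 j k" using q1eq[of j k] by (simp add: algebra_simps)
        finally show ?thesis .
      next
        case False
        hence "P j k = 0" using Pn[of j k] by simp
        moreover have "0 \<le> a t j * q 1 j k" unfolding a_def using q01 Mn by simp
        ultimately show ?thesis by simp
      qed
    qed
    also have "\<dots> = a t j" using infsumI[OF rowQ[of j]] by (simp add: infsum_cmult_right')
    finally have "(\<Sum>\<^sub>\<infinity>k. P j k * w (Suc t) k) \<le> a t j" .
    then show ?thesis using inner01[of j "Suc t"] unfolding w_def by simp
  qed
  define g where "g = 1 - (\<Sum>\<^sub>\<infinity>k. P i k * min (a1 i k) 1)"
  have ati: "a t i = 1" if "t \<ge> 1" "mpow P t i i > 0" for t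
    using diag[OF st q01 supp E recP recQ that] that unfolding a_def by simp
  have inner_i: "(\<Sum>\<^sub>\<infinity>k. P i k * w (Suc t) k) = 1 - g" if "t \<ge> 1" "mpow P t i i > 0" for t
  proof -
    have e: "P i k * w (Suc t) k = P i k * min (a1 i k) 1" for k
    proof (cases "P i k > 0")
      case True
      then show ?thesis unfolding w_def using aE[OF that True] ati[OF that] by simp
    next
      case False
      hence "P i k = 0" using Pn[of i k] by simp
      then show ?thesis by simp
    qed
    show ?thesis unfolding g_def by (simp only: e)
  qed
  define W where "W t = (\<Sum>\<^sub>\<infinity>j. mpow P t i j * w t j)" for t
  have xs: "(\<lambda>j. mpow P t i j) summable_on UNIV" for t by (rule has_sum_imp_summable[OF mpow_row[OF st]])
  have sW: "(\<lambda>j. mpow P t i j * w t' j) summable_on UNIV" for t t'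
    by (rule summable_on_comparison_test[OF xs]) (use Mn w0 w1 in \<open>auto intro: mult_left_le\<close>)
  have W0: "0 \<le> W t" for t unfolding W_def by (rule infsum_nonneg) (use Mn w0 in simp)
  have W1: "W t \<le> 1" for t
  proof -
    have "W t \<le> (\<Sum>\<^sub>\<infinity>j. mpow P t i j)" unfolding W_def
      by (rule infsum_mono[OF sW xs]) (use Mn w1 in \<open>auto intro: mult_left_le\<close>)
    also have "\<dots> = 1" by (rule infsumI[OF mpow_row[OF st]])
    finally show ?thesis .
  qed
  have step: "W (Suc t) + mpow P t i i * g \<le> W t" if t1: "t \<ge> 1" for t
  proof -
    note f = fub[where x="\<lambda>j. mpow P t i j" and w="w (Suc t)", OF st Mn xs w0 w1]
    have "W (Suc t) = (\<Sum>\<^sub>\<infinity>k. (\<Sum>\<^sub>\<infinity>j. mpow P t i j * P j k) * w (Suc t) k)"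
      unfolding W_def by (simp add: mpow.simps(2))
    also have "\<dots> = (\<Sum>\<^sub>\<infinity>j. mpow P t i j * (\<Sum>\<^sub>\<infinity>k. P j k * w (Suc t) k))" by (rule f(2))
    finally have Weq: "W (Suc t) = \<dots>" .
    define inn where "inn j = (\<Sum>\<^sub>\<infinity>k. P j k * w (Suc t) k)" for j
    have s1: "(\<lambda>j. mpow P t i j * inn j) summable_on UNIV"
      by (rule summable_on_comparison_test[OF xs]) (use Mn inner01 in \<open>auto simp: inn_def intro: mult_left_le\<close>)
    have s2: "(\<lambda>j. if j = i then mpow P t i i * g else 0) summable_on UNIV"
      by (rule has_sum_imp_summable[OF has_sum_single_pt])
    have "W (Suc t) + mpow P t i i * g = (\<Sum>\<^sub>\<infinity>j. mpow P t i j * inn j) + (\<Sum>\<^sub>\<infinity>j. if j = i then mpow P t i i * g else 0)"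
      using Weq by (simp add: inn_def infsum_single_pt)
    also have "\<dots> = (\<Sum>\<^sub>\<infinity>j. mpow P t i j * inn j + (if j = i then mpow P t i i * g else 0))"
      by (rule infsum_add[OF s1 s2, symmetric])
    also have "\<dots> \<le> W t" unfolding W_def
    proof (rule infsum_mono[OF summable_on_add[OF s1 s2] sW])
      fix j
      show "mpow P t i j * inn j + (if j = i then mpow P t i i * g else 0) \<le> mpow P t i j * w t j"
      proof (cases "mpow P t i j > 0")
        case False
        hence "mpow P t i j = 0" using Mn[of t i j] by simp
        then show ?thesis by auto
      next
        case True
        show ?thesis
        proof (cases "j = i")
          case False
          then show ?thesis using inner_le[OF t1 True] Mn[of t i j] by (simp add: inn_def mult_left_mono)
        next
          case ji: True
          have "w t i = 1" unfolding w_def using ati[OF t1] True ji by simp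
          moreover have "inn i = 1 - g" using inner_i[OF t1] True ji by (simp add: inn_def)
          moreover have "g * mpow P t i i + inn i * mpow P t i i = (g + inn i) * mpow P t i i"
            by (simp add: algebra_simps)
          ultimately show ?thesis using ji by (simp add: algebra_simps)
        qed
      qed
    qed
    finally show ?thesis .
  qed
  have g0: "0 \<le> g"
  proof -
    have "(\<Sum>\<^sub>\<infinity>k. P i k * min (a1 i k) 1) \<le> (\<Sum>\<^sub>\<infinity>k. P i k)"
    proof (rule infsum_mono)
      show "(\<lambda>k. P i k * min (a1 i k) 1) summable_on UNIV"
        by (rule summable_on_comparison_test[OF has_sum_imp_summable[OF rowP[of i]]])
           (use Pn q01 in \<open>auto simp: a1_def intro: mult_left_le\<close>)
      show "(\<lambda>k. P i k) summable_on UNIV" by (rule has_sum_imp_summable[OF rowP])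
      show "P i k * min (a1 i k) 1 \<le> P i k" for k using Pn[of i k] by (simp add: mult_left_le)
    qed
    then show ?thesis unfolding g_def using infsumI[OF rowP[of i]] by simp
  qed
  have ind: "W (Suc N) + g * (\<Sum>n<N. mpow P (Suc n) i i) \<le> W 1" for N
  proof (induction N)
    case 0 then show ?case by simp
  next
    case (Suc N)
    have "W (Suc (Suc N)) + mpow P (Suc N) i i * g \<le> W (Suc N)" by (rule step) simp
    then show ?case using Suc.IH by (simp add: algebra_simps)
  qed
  have g00: "g = 0"
  proof (rule ccontr)
    assume "g \<noteq> 0"
    hence gp: "g > 0" using g0 by simp
    have "summable (\<lambda>n. mpow P (Suc n) i i)"
    proof (rule summableI_nonneg_bounded[where x="1/g"])
      show "0 \<le> mpow P (Suc n) i i" for n by (rule Mn)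
      fix N
      have "g * (\<Sum>n<N. mpow P (Suc n) i i) \<le> 1" using ind[of N] W0[of "Suc N"] W1[of 1] by simp
      then show "(\<Sum>n<N. mpow P (Suc n) i i) \<le> 1 / g" using gp by (simp add: field_simps)
    qed
    then show False using recP by simp
  qed
  have ge: "P i k' \<le> q 1 i k'" for k'
  proof (cases "P i k' > 0")
    case False
    then show ?thesis using q01[of 1 i k'] Pn[of i k'] by simp
  next
    case True
    have sm: "(\<lambda>k. P i k * min (a1 i k) 1) summable_on UNIV"
      by (rule summable_on_comparison_test[OF has_sum_imp_summable[OF rowP[of i]]])
         (use Pn q01 in \<open>auto simp: a1_def intro: mult_left_le\<close>)
    have "((\<lambda>k. P i k - P i k * min (a1 i k) 1) has_sum (1 - (1 - g))) UNIV"
      by (rule has_sum_diff'[OF rowP]) (use has_sum_infsum[OF sm] in \<open>simp add: g_def\<close>)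
    hence "P i k' - P i k' * min (a1 i k') 1 = 0"
      by (rule nonneg_has_sum_le_0D) (use g00 Pn in \<open>auto intro: mult_left_le\<close>)
    hence "min (a1 i k') 1 = 1" using True by simp
    hence "1 \<le> a1 i k'" by linarith
    hence "P i k' * 1 \<le> P i k' * a1 i k'" using True by (intro mult_left_mono) auto
    then show ?thesis using q1eq[of i k'] by simp
  qed
  have "((\<lambda>k. q 1 i k - P i k) has_sum (1 - 1)) UNIV" by (rule has_sum_diff'[OF rowQ rowP])
  hence "q 1 i k - P i k = 0" by (rule nonneg_has_sum_le_0D) (use ge in auto)
  then show ?thesis by simp
qed



abbreviation ee :: "'a \<Rightarrow> 'a \<Rightarrow> complex" where "ee j \<equiv> indicator {j}"

lemma in_linfI: "(\<And>x. cmod (f x) \<le> C) \<Longrightarrow> f \<in> linf"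
  unfolding linf_def by blast

lemma ee_linf: "ee j \<in> linf" by (rule in_linfI[of _ 1]) (simp add: indicator_def)

lemma linf_mult: assumes "f \<in> linf" "g \<in> linf" shows "(\<lambda>x. f x * g x) \<in> linf"
proof -
  obtain C where C: "\<And>x. cmod (f x) \<le> C" using assms(1) unfolding linf_def by blast
  obtain D where D: "\<And>x. cmod (g x) \<le> D" using assms(2) unfolding linf_def by blast
  have "cmod (f x * g x) \<le> C * D" for x
    unfolding norm_mult by (rule mult_mono[OF C D]) (use C[of x] norm_ge_zero[of "f x"] in linarith, simp)
  then show ?thesis by (rule in_linfI)
qed

lemma idem_indicator:
  fixes f :: "'a \<Rightarrow> complex"
  assumes "\<And>x. f x * f x = f x"
  shows "f = indicator {x. f x = 1}"
proof
  fix x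
  have "f x * (f x - 1) = 0" using assms[of x] by (simp add: algebra_simps)
  then have "f x = 0 \<or> f x = 1" by simp
  then show "f x = indicator {x. f x = 1} x" by (auto simp: indicator_def)
qed

lemma ee_idem: "(\<lambda>x. ee j x * ee j x) = ee j" by (auto simp: indicator_def)

lemma ee_inj: "ee a = ee b \<Longrightarrow> a = b"
  by (metis indicator_simps(1) indicator_simps(2) insertI1 singletonD zero_neq_one)

lemma sigma_exists:
  assumes sa: "star_automorphism \<rho>"
  shows "bij (sigma_of \<rho>) \<and> (\<forall>j. \<rho> (ee j) = ee (sigma_of \<rho> j))"
proof -
  have bij: "bij_betw \<rho> linf linf"
    and mul: "\<And>f g. f \<in> linf \<Longrightarrow> g \<in> linf \<Longrightarrow> \<rho> (\<lambda>x. f x * g x) = (\<lambda>x. \<rho> f x * \<rho> g x)"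
    and sc: "\<And>f c. f \<in> linf \<Longrightarrow> \<rho> (\<lambda>x. c * f x) = (\<lambda>x. c * \<rho> f x)"
    using sa unfolding star_automorphism_def by blast+
  have inj: "\<And>f g. f \<in> linf \<Longrightarrow> g \<in> linf \<Longrightarrow> \<rho> f = \<rho> g \<Longrightarrow> f = g"
    using bij unfolding bij_betw_def inj_on_def by blast
  have surj: "\<exists>h\<in>linf. \<rho> h = g" if "g \<in> linf" for g
  proof -
    have "g \<in> \<rho> ` linf" using bij that unfolding bij_betw_def by simp
    thus ?thesis by (auto simp: image_iff)
  qed
  have img: "\<And>f. f \<in> linf \<Longrightarrow> \<rho> f \<in> linf"
    using bij unfolding bij_betw_def by blast
  have z_linf: "(\<lambda>x. 0::complex) \<in> linf" by (rule in_linfI[of _ 0]) simp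
  have rz: "\<rho> (\<lambda>x. 0) = (\<lambda>x. 0)"
    using sc[OF z_linf, of 0] by simp
  have ex: "\<exists>y. \<rho> (ee j) = ee y" for j
  proof -
    define f where "f = \<rho> (ee j)"
    have m: "\<rho> (\<lambda>x. ee j x * ee j x) = (\<lambda>x. \<rho> (ee j) x * \<rho> (ee j) x)" by (rule mul[OF ee_linf ee_linf])
    have "(\<lambda>x. f x * f x) = f" unfolding f_def using m by (simp only: ee_idem)
    hence fi: "f = indicator {x. f x = 1}" using idem_indicator[of f] by metis
    define S where "S = {x. f x = 1}"
    have "S \<noteq> {}"
    proof
      assume "S = {}"
      hence "f = (\<lambda>x. 0)" using fi S_def by (simp add: fun_eq_iff)
      hence "\<rho> (ee j) = \<rho> (\<lambda>x. 0)" using rz f_def by simp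
      hence "ee j = (\<lambda>x. 0)" using inj[OF ee_linf z_linf] by blast
      then show False by (metis indicator_simps(1) singletonI zero_neq_one)
    qed
    then obtain x where xS: "x \<in> S" by blast
    obtain h where h: "h \<in> linf" "\<rho> h = ee x" using surj[OF ee_linf] by blast
    have hl: "(\<lambda>y. h y * ee j y) \<in> linf" by (rule linf_mult[OF h(1) ee_linf])
    have "\<rho> (\<lambda>y. h y * ee j y) = (\<lambda>y. ee x y * f y)" using mul[OF h(1) ee_linf] h(2) f_def by simp
    also have "\<dots> = ee x" using xS fi S_def by (auto simp: indicator_def)
    finally have "(\<lambda>y. h y * ee j y) = h" using inj[OF hl h(1)] h(2) by simp
    hence hj: "h = (\<lambda>y. h j * ee j y)" by (metis (no_types, lifting) indicator_simps(2) indicator_simps(1) mult.commute mult_1 mult_zero_left singletonD singletonI)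
    have "ee x = \<rho> (\<lambda>y. h j * ee j y)" using h(2) hj by simp
    also have "\<dots> = (\<lambda>y. h j * f y)" using sc[OF ee_linf] f_def by simp
    finally have exf: "ee x = (\<lambda>y. h j * f y)" .
    have "f x = 1" using xS S_def by simp
    hence "h j = 1" using fun_cong[OF exf, of x] by simp
    hence "f = ee x" using exf by simp
    thus ?thesis unfolding f_def by blast
  qed
  have sig: "\<rho> (ee j) = ee (sigma_of \<rho> j)" for j
  proof -
    obtain y where y: "\<rho> (ee j) = ee y" using ex by blast
    have "sigma_of \<rho> j = y" unfolding sigma_of_def
      by (rule the_equality) (use y ee_inj[of y] in \<open>auto intro: sym\<close>)
    thus ?thesis using y by simp
  qed
  have "inj (sigma_of \<rho>)"
  proof (rule injI)
    fix a b assume "sigma_of \<rho> a = sigma_of \<rho> b"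
    hence "\<rho> (ee a) = \<rho> (ee b)" using sig by simp
    hence "ee a = ee b" using inj[OF ee_linf ee_linf] by blast
    thus "a = b" by (rule ee_inj)
  qed
  moreover have "surj (sigma_of \<rho>)"
  proof -
    have "y \<in> range (sigma_of \<rho>)" for y
    proof -
      obtain h where h: "h \<in> linf" "\<rho> h = ee y" using surj[OF ee_linf] by blast
      have hh: "(\<lambda>x. h x * h x) \<in> linf" by (rule linf_mult[OF h(1) h(1)])
      have "\<rho> (\<lambda>x. h x * h x) = (\<lambda>x. ee y x * ee y x)" using mul[OF h(1) h(1)] h(2) by simp
      hence "\<rho> (\<lambda>x. h x * h x) = \<rho> h" using h(2) by (simp only: ee_idem)
      hence "(\<lambda>x. h x * h x) = h" using inj[OF hh h(1)] by blast
      hence hi: "h = indicator {x. h x = 1}" using idem_indicator[of h] by metis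
      have "h \<noteq> (\<lambda>x. 0)"
      proof
        assume "h = (\<lambda>x. 0)"
        hence "ee y = (\<lambda>x. 0)" using h(2) rz by simp
        then show False by (metis indicator_simps(1) singletonI zero_neq_one)
      qed
      define T where "T = {x. h x = 1}"
      have hT: "h = indicator T" using hi unfolding T_def .
      have "T \<noteq> {}"
      proof
        assume "T = {}"
        hence "h = (\<lambda>x. 0)" using hT by (simp add: fun_eq_iff)
        thus False using \<open>h \<noteq> (\<lambda>x. 0)\<close> by simp
      qed
      then obtain j where jT: "j \<in> T" by blast
      have ejh: "(\<lambda>x. ee j x * h x) = ee j" using jT hT by (auto simp: indicator_def)
      have "\<rho> (\<lambda>x. ee j x * h x) = (\<lambda>x. \<rho> (ee j) x * \<rho> h x)" by (rule mul[OF ee_linf h(1)])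
      hence eq: "(\<lambda>x. ee (sigma_of \<rho> j) x * ee y x) = ee (sigma_of \<rho> j)"
        using ejh h(2) sig[of j] by simp
      have "ee (sigma_of \<rho> j) (sigma_of \<rho> j) * ee y (sigma_of \<rho> j) = ee (sigma_of \<rho> j) (sigma_of \<rho> j)"
        using fun_cong[OF eq, of "sigma_of \<rho> j"] by simp
      hence "ee y (sigma_of \<rho> j) = 1" by simp
      hence "sigma_of \<rho> j = y" by (simp add: indicator_def split: if_splits)
      thus ?thesis by blast
    qed
    thus ?thesis by blast
  qed
  ultimately show ?thesis using sig bij_def by blast
qed



definition EM :: "'a \<Rightarrow> 'a \<Rightarrow> complex \<Rightarrow> 'a \<Rightarrow> 'a \<Rightarrow> complex" where
  "EM i j c = (\<lambda>a b. if a = i \<and> b = j then c else 0)"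

lemma EM_arv: assumes "mpow R n i j \<noteq> 0" shows "EM i j c \<in> arv R n"
proof -
  have f: "(\<lambda>a. (cmod (EM i j c a b))\<^sup>2) = (\<lambda>a. if a = i then (if b = j then (cmod c)\<^sup>2 else 0) else 0)" for b
    by (auto simp: EM_def)
  show ?thesis unfolding arv_def
  proof (intro CollectI conjI allI impI exI)
    show "EM i j c a b = 0" if "mpow R n a b = 0" for a b using that assms by (auto simp: EM_def)
    show "(\<lambda>a. (cmod (EM i j c a b))\<^sup>2) summable_on UNIV" for b
      unfolding f by (rule has_sum_imp_summable[OF has_sum_single_pt])
    show "(\<Sum>\<^sub>\<infinity>a. (cmod (EM i j c a b))\<^sup>2) \<le> (cmod c)\<^sup>2" for b
      unfolding f infsum_single_pt by simp
  qed
qed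

lemma act_EM: "arv_act (ee x) A (ee y) = EM x y (A x y)"
  by (auto simp: arv_act_def EM_def indicator_def fun_eq_iff)

lemma inner_EM: "arv_inner (EM i j c) (EM i j c) = (\<lambda>b. if b = j then cnj c * c else 0)"
proof
  fix b
  have "(\<lambda>a. cnj (EM i j c a b) * EM i j c a b) = (\<lambda>a. if a = i then (if b = j then cnj c * c else 0) else 0)"
    by (auto simp: EM_def)
  then show "arv_inner (EM i j c) (EM i j c) b = (if b = j then cnj c * c else 0)"
    unfolding arv_inner_def by (simp add: infsum_single_pt)
qed

lemma arvU_EM: "arvU R n m (EM i j x) (EM j k y) =
   EM i k (complex_of_real (flat (sqrt (mpow R (n+m) i k))) *
      ((complex_of_real (sqrt (mpow R n i j)) * x) * (complex_of_real (sqrt (mpow R m j k)) * y)))"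
proof (intro ext)
  fix a b
  have "(\<lambda>l. (complex_of_real (sqrt (mpow R n a l)) * EM i j x a l) * (complex_of_real (sqrt (mpow R m l b)) * EM j k y l b))
     = (\<lambda>l. if l = j then (if a = i \<and> b = k then (complex_of_real (sqrt (mpow R n i j)) * x) * (complex_of_real (sqrt (mpow R m j k)) * y) else 0) else 0)"
    by (auto simp: EM_def)
  then show "arvU R n m (EM i j x) (EM j k y) a b = EM i k (complex_of_real (flat (sqrt (mpow R (n+m) i k))) *
      ((complex_of_real (sqrt (mpow R n i j)) * x) * (complex_of_real (sqrt (mpow R m j k)) * y))) a b"
    unfolding arvU_def by (simp add: infsum_single_pt) (auto simp: EM_def)
qed

lemma flat_sqrt_eq:
  fixes x y z x' y' z' :: real
  assumes "x > 0" "y > 0" "z > 0" "x' \<ge> 0" "y' \<ge> 0" "z' \<ge> 0"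
    and eq: "flat (sqrt x) * (sqrt y * sqrt z) = flat (sqrt x') * (sqrt y' * sqrt z')"
  shows "y * z * x' = y' * z' * x"
proof -
  have l: "flat (sqrt x) * (sqrt y * sqrt z) > 0" using assms(1-3) by (simp add: flat_def)
  hence r: "flat (sqrt x') * (sqrt y' * sqrt z') > 0" using eq by simp
  have x'p: "x' > 0"
  proof (rule ccontr)
    assume "\<not> x' > 0"
    hence "flat (sqrt x') = 0" by (simp add: flat_def)
    thus False using r by simp
  qed
  have sq: "(flat (sqrt u) * (sqrt v * sqrt w))\<^sup>2 = v * w / u" if "u > 0" "v \<ge> 0" "w \<ge> 0" for u v w :: real
    using that by (simp add: flat_def power_mult_distrib power_inverse field_simps)
  have "y * z / x = y' * z' / x'"
    using arg_cong[OF eq, of "\<lambda>t. t\<^sup>2"] sq[of x y z] sq[of x' y' z'] assms x'p by simp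
  then show ?thesis using assms x'p by (simp add: field_simps)
qed



theorem mainTheorem9:
  fixes P Q :: "'a::countable \<Rightarrow> 'a \<Rightarrow> real"
    and \<rho> :: "('a \<Rightarrow> complex) \<Rightarrow> ('a \<Rightarrow> complex)"
  assumes "stochastic P" and "stochastic Q"
    and "recurrent P" and "recurrent Q"
    and "star_automorphism \<rho>"
    and "\<exists>V. rho_unitary_iso P Q \<rho> V"
  shows "\<forall>i j. P i j = Q (sigma_of \<rho> i) (sigma_of \<rho> j)"
proof -
  note stP = assms(1) and stQ = assms(2)
  obtain V where V: "rho_unitary_iso P Q \<rho> V" using assms(6) by blast
  have Vimg: "\<And>n. n \<ge> 1 \<Longrightarrow> V n ` arv P n = arv Q n"
    and Vsc: "\<And>n A c. n \<ge> 1 \<Longrightarrow> A \<in> arv P n \<Longrightarrow> V n (\<lambda>i j. c * A i j) = (\<lambda>i j. c * V n A i j)"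
    and Vact: "\<And>n A a b. n \<ge> 1 \<Longrightarrow> A \<in> arv P n \<Longrightarrow> a \<in> linf \<Longrightarrow> b \<in> linf \<Longrightarrow>
        V n (arv_act a A b) = arv_act (\<rho> a) (V n A) (\<rho> b)"
    and Vinn: "\<And>n A B. n \<ge> 1 \<Longrightarrow> A \<in> arv P n \<Longrightarrow> B \<in> arv P n \<Longrightarrow>
        arv_inner (V n A) (V n B) = \<rho> (arv_inner A B)"
    and VU: "\<And>n m A B. n \<ge> 1 \<Longrightarrow> m \<ge> 1 \<Longrightarrow> A \<in> arv P n \<Longrightarrow> B \<in> arv P m \<Longrightarrow>
        V (n + m) (arvU P n m A B) = arvU Q n m (V n A) (V m B)"
    using V unfolding rho_unitary_iso_def by blast+
  define s where "s = sigma_of \<rho>"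
  have sbij: "bij s" and rs: "\<And>j. \<rho> (ee j) = ee (s j)"
    using sigma_exists[OF assms(5)] unfolding s_def by blast+
  have EM_act: "EM i j c = arv_act (ee i) (EM i j c) (ee j)" for i j c
    by (simp add: act_EM) (simp add: EM_def)
  have VE: "\<exists>c. cmod c = 1 \<and> V n (EM i j 1) = EM (s i) (s j) c"
    if n: "n \<ge> 1" and p: "mpow P n i j \<noteq> 0" for n i j
  proof -
    have A: "EM i j 1 \<in> arv P n" by (rule EM_arv[OF p])
    define c where "c = V n (EM i j 1) (s i) (s j)"
    have "V n (EM i j 1) = V n (arv_act (ee i) (EM i j 1) (ee j))" using EM_act by metis
    also have "\<dots> = arv_act (ee (s i)) (V n (EM i j 1)) (ee (s j))"
      using Vact[OF n A ee_linf ee_linf] rs by simp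
    also have "\<dots> = EM (s i) (s j) c" unfolding c_def by (rule act_EM)
    finally have VEq: "V n (EM i j 1) = EM (s i) (s j) c" .
    have ie: "arv_inner (EM i j 1) (EM i j 1) = ee j"
      unfolding inner_EM by (auto simp: indicator_def)
    have "arv_inner (EM (s i) (s j) c) (EM (s i) (s j) c) = arv_inner (V n (EM i j 1)) (V n (EM i j 1))"
      by (simp only: VEq)
    also have "\<dots> = \<rho> (arv_inner (EM i j 1) (EM i j 1))" by (rule Vinn[OF n A A])
    also have "\<dots> = \<rho> (ee j)" by (simp only: ie)
    also have "\<dots> = ee (s j)" by (rule rs)
    finally have "(\<lambda>b. if b = s j then cnj c * c else 0) = ee (s j)" by (simp only: inner_EM)
    from fun_cong[OF this, of "s j"] have "cnj c * c = 1" by simp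
    hence "complex_of_real ((cmod c)\<^sup>2) = 1" using complex_norm_square[of c] by (simp add: mult.commute)
    hence "(cmod c)\<^sup>2 = 1" using of_real_eq_1_iff by blast
    hence "cmod c = 1" using norm_ge_zero[of c] by (simp add: power2_eq_1_iff)
    then show ?thesis using VEq by blast
  qed
  have VE': "\<exists>c. cmod c = 1 \<and> V n (EM i j 1) = EM (s i) (s j) c"
    if "n \<ge> 1" "mpow P n i j > 0" for n i j
  proof -
    have "mpow P n i j \<noteq> 0" using that(2) by simp
    thus ?thesis by (rule VE[OF that(1)])
  qed
  have suppF: "mpow Q n (s i) (s j) > 0" if n: "n \<ge> 1" and p: "mpow P n i j > 0" for n i j
  proof -
    from VE'[OF n p] obtain c where c': "cmod c = 1 \<and> V n (EM i j 1) = EM (s i) (s j) c" ..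
    hence c: "cmod c = 1" "V n (EM i j 1) = EM (s i) (s j) c" by simp_all
    have e: "EM i j 1 \<in> arv P n" by (rule EM_arv) (use p in simp)
    have "V n (EM i j 1) \<in> V n ` arv P n" using e by (rule imageI)
    hence "V n (EM i j 1) \<in> arv Q n" using Vimg[OF n] by simp
    hence "EM (s i) (s j) c \<in> arv Q n" using c by simp
    hence "\<forall>a b. mpow Q n a b = 0 \<longrightarrow> EM (s i) (s j) c a b = 0" unfolding arv_def by blast
    hence "mpow Q n (s i) (s j) = 0 \<longrightarrow> EM (s i) (s j) c (s i) (s j) = 0" by blast
    hence "mpow Q n (s i) (s j) = 0 \<longrightarrow> c = 0" by (simp add: EM_def)
    moreover have "c \<noteq> 0" using c by auto
    ultimately show ?thesis using mpow_nn[OF stQ, of n "s i" "s j"] by linarith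
  qed
  have suppB: "mpow P n i j > 0" if n: "n \<ge> 1" and p: "mpow Q n (s i) (s j) > 0" for n i j
  proof (rule ccontr)
    assume np: "\<not> mpow P n i j > 0"
    hence p0: "mpow P n i j = 0" using mpow_nn[OF stP, of n i j] by simp
    have "EM (s i) (s j) 1 \<in> arv Q n" by (rule EM_arv) (use p in simp)
    then obtain A where A: "A \<in> arv P n" "V n A = EM (s i) (s j) 1" using Vimg[OF n] by (metis imageE)
    have Aij: "A i j = 0" using A(1) p0 unfolding arv_def by blast
    have "V n (arv_act (ee i) A (ee j)) = arv_act (ee (s i)) (V n A) (ee (s j))"
      using Vact[OF n A(1) ee_linf ee_linf] rs by simp
    also have "\<dots> = EM (s i) (s j) 1" using A(2) by (simp add: act_EM) (simp add: EM_def)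
    finally have e1: "V n (arv_act (ee i) A (ee j)) = EM (s i) (s j) 1" .
    have "arv_act (ee i) A (ee j) = (\<lambda>a b. 0 * A a b)" using Aij by (auto simp: act_EM EM_def)
    hence "V n (arv_act (ee i) A (ee j)) = (\<lambda>a b. 0 * V n A a b)" using Vsc[OF n A(1), of 0] by simp
    hence "EM (s i) (s j) 1 = (\<lambda>a b. 0)" using e1 by simp
    then show False using fun_cong[of _ _ "s i"] by (metis EM_def zero_neq_one)
  qed
  define q where "q n x y = mpow Q n (s x) (s y)" for n x y
  have q01: "0 \<le> q n x y \<and> q n x y \<le> 1" for n x y
    unfolding q_def using mpow_nn[OF stQ] mpow_le1[OF stQ] by simp
  have Eid: "mpow P n x y * mpow P m y z * q (n+m) x z = q n x y * q m y z * mpow P (n+m) x z"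
    if n: "n \<ge> 1" and m: "m \<ge> 1" and pxy: "mpow P n x y > 0" and pyz: "mpow P m y z > 0" for n m x y z
  proof -
    have nm: "n + m \<ge> 1" using n by simp
    have "mpow P n x y * mpow P m y z \<le> mpow P (n+m) x z" by (rule mpow_ck[OF stP])
    hence pxz: "mpow P (n+m) x z > 0" using pxy pyz by (meson less_le_trans mult_pos_pos)
    from VE'[OF n pxy] obtain c1 where c1': "cmod c1 = 1 \<and> V n (EM x y 1) = EM (s x) (s y) c1" ..
    hence c1: "cmod c1 = 1" "V n (EM x y 1) = EM (s x) (s y) c1" by simp_all
    from VE'[OF m pyz] obtain c2 where c2': "cmod c2 = 1 \<and> V m (EM y z 1) = EM (s y) (s z) c2" ..
    hence c2: "cmod c2 = 1" "V m (EM y z 1) = EM (s y) (s z) c2" by simp_all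
    from VE'[OF nm pxz] obtain c3 where c3': "cmod c3 = 1 \<and> V (n+m) (EM x z 1) = EM (s x) (s z) c3" ..
    hence c3: "cmod c3 = 1" "V (n+m) (EM x z 1) = EM (s x) (s z) c3" by simp_all
    have A1: "EM x y 1 \<in> arv P n" by (rule EM_arv) (use pxy in simp)
    have A2: "EM y z 1 \<in> arv P m" by (rule EM_arv) (use pyz in simp)
    have A3: "EM x z 1 \<in> arv P (n+m)" by (rule EM_arv) (use pxz in simp)
    define rP where "rP = flat (sqrt (mpow P (n+m) x z)) * (sqrt (mpow P n x y) * sqrt (mpow P m y z))"
    define rQ where "rQ = flat (sqrt (q (n+m) x z)) * (sqrt (q n x y) * sqrt (q m y z))"
    have "arvU P n m (EM x y 1) (EM y z 1) = EM x z (complex_of_real rP)"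
      unfolding arvU_EM rP_def by simp
    also have "\<dots> = (\<lambda>a b. complex_of_real rP * EM x z 1 a b)" by (auto simp: EM_def fun_eq_iff)
    finally have "V (n+m) (arvU P n m (EM x y 1) (EM y z 1)) = (\<lambda>a b. complex_of_real rP * V (n+m) (EM x z 1) a b)"
      using Vsc[OF nm A3] by simp
    hence L: "V (n+m) (arvU P n m (EM x y 1) (EM y z 1)) (s x) (s z) = complex_of_real rP * c3"
      using c3 by (simp add: EM_def)
    have "arvU Q n m (V n (EM x y 1)) (V m (EM y z 1)) = EM (s x) (s z) (complex_of_real rQ * (c1 * c2))"
      unfolding c1 c2 arvU_EM rQ_def q_def by (simp add: algebra_simps)
    hence R: "arvU Q n m (V n (EM x y 1)) (V m (EM y z 1)) (s x) (s z) = complex_of_real rQ * (c1 * c2)"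
      by (simp add: EM_def)
    have "complex_of_real rP * c3 = complex_of_real rQ * (c1 * c2)"
      using L R VU[OF n m A1 A2] by simp
    hence "cmod (complex_of_real rP * c3) = cmod (complex_of_real rQ * (c1 * c2))" by simp
    hence "\<bar>rP\<bar> = \<bar>rQ\<bar>" using c1 c2 c3 by (simp add: norm_mult)
    moreover have "rP \<ge> 0" "rQ \<ge> 0" unfolding rP_def rQ_def flat_def
      using mpow_nn[OF stP, of n x y] mpow_nn[OF stP, of m y z] q01[of n x y] q01[of m y z]
      by (auto intro!: mult_nonneg_nonneg)
    ultimately have "rP = rQ" by simp
    then show ?thesis
      using flat_sqrt_eq[of "mpow P (n+m) x z" "mpow P n x y" "mpow P m y z" "q (n+m) x z" "q n x y" "q m y z"]
        pxz pxy pyz mpow_nn[OF stQ] unfolding rP_def rQ_def q_def by simp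
  qed
  have supp: "n \<ge> 1 \<Longrightarrow> (mpow P n x y > 0 \<longleftrightarrow> q n x y > 0)" for n x y
    unfolding q_def using suppF suppB by blast
  have rowQ: "((\<lambda>k. q 1 x k) has_sum 1) UNIV" for x
  proof -
    have "bij_betw s UNIV UNIV" using sbij by (simp add: bij_def)
    hence "((\<lambda>k. Q (s x) (s k)) has_sum 1) UNIV = ((\<lambda>k. Q (s x) k) has_sum 1) UNIV"
      by (rule has_sum_reindex_bij_betw)
    then show ?thesis unfolding q_def mpow_1 using stoch_row[OF stQ] by simp
  qed
  show ?thesis
  proof (intro allI)
    fix i j
    have recP: "\<not> summable (\<lambda>n. mpow P (Suc n) i i)" using assms(3) unfolding recurrent_def by blast
    have recQ: "\<not> summable (\<lambda>n. q (Suc n) i i)" using assms(4) unfolding recurrent_def q_def by blast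
    have "q 1 i j = P i j" by (rule rowfix[OF stP q01 supp Eid recP recQ rowQ])
    then show "P i j = Q (sigma_of \<rho> i) (sigma_of \<rho> j)" unfolding q_def s_def mpow_1 by simp
  qed
qed


end
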